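(* Let $D=(N,A)$, $\mathcal{K}$, $\{D^k\}_{k\in\mathcal{K}}$ be an instance of SND-RR with time horizon $T$, let $\mathcal{A}$ be a valid arc partition and $G=G(D,\mathcal{A})$ the auxiliary flat network. Then the integer programs SND-RR$(D_T)$ and SND-RR$(G_T)$ have the same number of variables and the same number of constraints, and they are equivalent: there is a bijection between their feasible solutions preserving the objective value.
   Context: An instance of SND-RR consists of: a directed graph $D=(N,A)$; for each arc $vw\in A$ a transit time $\tau_{vw}\in\mathbb{Z}_{>0}$, fixed cost $f_{vw}>0$, capacity $u_{vw}\in\mathbb{Z}_{>0}$, and per-unit cost $c^k_{vw}>0$ for each commodity $k$; a set $\mathcal{K}$ of commodities, each with origin $o_k$, destination $d_k$, demand $q_k$, release time $r_k$, deadline $l_k$ (integers, earliest release $0$); and subgraphs $D^k=(N^k,A^k)\subseteq D$. Standing assumption: $\delta^+_{D^k}(d_k)=\emptyset$ and $\delta^+_{D^k}(v)\ne\emptyset$ for $v\in N^k\setminus\{d_k\}$. $T=\max_kl_k$, $[T]=\{0,\dots,T\}$. For any flat graph $H$ with transit times, its time-expanded network $H_T$ has timed nodes $(v,t)$, $t\in[T]$, movement arcs $((v,t),(w,t+\tau_{vw}))$ for arcs $vw$ of $H$ with $t+\tau_{vw}\le T$, and holdover arcs $((v,t),(v,t+1))$. $D_T=(N_T,A_T\cup H_T)$, $D^k_T=(N^k_T,A^k_T\cup H^k_T)$. For a timed arc $a=((v,t),(w,t'))$, $u_a=u_{vw}$, $f_a=f_{vw}$, $c^k_a=c^k_{vw}$;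 $x^k(S)=\sum_{a\in S}x^k_a$; $\delta^\pm$ denote outgoing/incoming timed arcs. SND-RR$(D_T)$: minimize $\sum_{a\in A_T}f_ay_a+\sum_{a\in A_T}\sum_kc^k_aq_kx^k_a$ s.t. for all $k$, $(v,t)\in N^k_T$: $x^k(\delta^+_{D^k_T}(v,t))-x^k(\delta^-_{D^k_T}(v,t))$ is $1$ at $(o_k,r_k)$, $-1$ at $(d_k,l_k)$, $0$ otherwise; $\sum_kq_kx^k_a\le u_ay_a$ for $a\in A_T$; $x^k_a\in\{0,1\}$ for $a\in A^k_T\cup H^k_T$; $y_a\in\mathbb{Z}_{\ge0}$ for $a\in A_T$. Valid partition: $\mathcal{A}=\{\mathcal{A}_v\}_{v\in N}$ with each $\mathcal{A}_v$ a partition of $\delta^+_D(v)$ such that for each $k$, $\delta^+_{D^k}(v)\subseteq A_i$ for some $A_i\in\mathcal{A}_v$. Auxiliary network $G=(V,E)$: $\mathcal{V}(v)=\{v^0,\dots,v^{|\mathcal{A}_v|}\}$ (copy $v^i$ per part $A_i$, terminal copy $v^0$), $V=\bigcup_v\mathcal{V}(v)$, $E=\{v^iw^j: vw\in A_i\in\mathcal{A}_v, w^j\in\mathcal{V}(w)\}$; each $v^iw^j$ gets the transit time and costs of $vw$. With $\mathcal{K}(A_i)=\{k:\emptyset\ne\delta^+_{D^k}(v)\subseteq A_i\}$ for $A_i\in\mathcal{A}_v$: $G^k=(V^k,E^k)$, $V^k=\{v^i:v\in N^k,A_i\in\mathcal{A}_v,k\in\mathcal{K}(A_i)\}\cup\{d^0_k\}$,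 $E^k=\{v^iw^j:vw\in A^k,v^i,w^j\in V^k\}$; $o'_k$ denotes the unique copy of $o_k$ in $V^k$. $G_T=(V_T,E_T\cup F_T)$ and $G^k_T=(V^k_T,E^k_T\cup F^k_T)$ are the time-expanded networks. For $a=((v,t),(w,t'))\in A_T$, $\mathcal{E}_T(a)=\{((v^i,t),(w^j,t')): vw\in A_i\in\mathcal{A}_v, w^j\in\mathcal{V}(w)\}$. SND-RR$(G_T)$: minimize $\sum_{a\in A_T}f_ay_a+\sum_k\sum_{e\in E_T}c^k_eq_kx^k_e$ s.t. for all $k$, $(v,t)\in V^k_T$: $x^k(\delta^+_{G^k_T}(v,t))-x^k(\delta^-_{G^k_T}(v,t))$ is $1$ at $(o'_k,r_k)$, $-1$ at $(d^0_k,l_k)$, $0$ otherwise; $\sum_k\sum_{e\in\mathcal{E}_T(a)}q_kx^k_e\le u_ay_a$ for all $a\in A_T$; $x^k_e\in\{0,1\}$ for $e\in E^k_T\cup F^k_T$; $y_a\in\mathbb{Z}_{\ge0}$ for $a\in A_T$. *)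

theory Defs
  imports Complex_Main
begin

text \<open>A timed arc is either a movement arc Inl (e, t) (flat arc e = (v,w) leaving v at
  time t, arriving at w at time t + tau e) or a holdover arc Inr (v, t) from (v,t) to (v,t+1).\<close>

type_synonym 'v tarc = "(('v \<times> 'v) \<times> nat) + ('v \<times> nat)"

definition tnodes :: "'v set \<Rightarrow> nat \<Rightarrow> ('v \<times> nat) set" where
  "tnodes V T = V \<times> {0..T}"

definition mv_arcs :: "('v \<times> 'v) set \<Rightarrow> ('v \<times> 'v \<Rightarrow> nat) \<Rightarrow> nat \<Rightarrow> 'v tarc set" where
  "mv_arcs E tau T = Inl ` {(e, t). e \<in> E \<and> t + tau e \<le> T}"

definition hold_arcs :: "'v set \<Rightarrow> nat \<Rightarrow> 'v tarc set" where
  "hold_arcs V T = Inr ` {(v, t). v \<in> V \<and> t + 1 \<le> T}"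

definition tarcs :: "'v set \<Rightarrow> ('v \<times> 'v) set \<Rightarrow> ('v \<times> 'v \<Rightarrow> nat) \<Rightarrow> nat \<Rightarrow> 'v tarc set" where
  "tarcs V E tau T = mv_arcs E tau T \<union> hold_arcs V T"

fun ttail :: "'v tarc \<Rightarrow> 'v \<times> nat" where
  "ttail (Inl ((v, w), t)) = (v, t)"
| "ttail (Inr (v, t)) = (v, t)"

fun thead :: "('v \<times> 'v \<Rightarrow> nat) \<Rightarrow> 'v tarc \<Rightarrow> 'v \<times> nat" where
  "thead tau (Inl ((v, w), t)) = (w, t + tau (v, w))"
| "thead tau (Inr (v, t)) = (v, t + 1)"

fun flat_arc :: "'v tarc \<Rightarrow> 'v \<times> 'v" where
  "flat_arc (Inl (e, t)) = e"
| "flat_arc (Inr (v, t)) = (v, v)"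

definition flow_cons ::
  "'v set \<Rightarrow> ('v \<times> 'v) set \<Rightarrow> ('v \<times> 'v \<Rightarrow> nat) \<Rightarrow> nat \<Rightarrow> 'v \<times> nat \<Rightarrow> 'v \<times> nat
     \<Rightarrow> ('v tarc \<Rightarrow> int) \<Rightarrow> bool" where
  "flow_cons V E tau T src snk x \<longleftrightarrow>
     (\<forall>p \<in> tnodes V T.
        (\<Sum>a \<in> {a \<in> tarcs V E tau T. ttail a = p}. x a)
      - (\<Sum>a \<in> {a \<in> tarcs V E tau T. thead tau a = p}. x a)
      = (if p = src then 1 else if p = snk then -1 else 0))"

record ('n, 'k) sndrr =
  nodes :: "'n set"
  arcs :: "('n \<times> 'n) set"
  tau :: "'n \<times> 'n \<Rightarrow> nat"
  fcost :: "'n \<times> 'n \<Rightarrow> real"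
  cap :: "'n \<times> 'n \<Rightarrow> nat"
  ucost :: "'k \<Rightarrow> 'n \<times> 'n \<Rightarrow> real"
  comms :: "'k set"
  orig :: "'k \<Rightarrow> 'n"
  dest :: "'k \<Rightarrow> 'n"
  dem :: "'k \<Rightarrow> real"
  rel :: "'k \<Rightarrow> nat"
  dl :: "'k \<Rightarrow> nat"
  Nk :: "'k \<Rightarrow> 'n set"
  Ak :: "'k \<Rightarrow> ('n \<times> 'n) set"

definition out_arcs :: "('v \<times> 'v) set \<Rightarrow> 'v \<Rightarrow> ('v \<times> 'v) set" where
  "out_arcs E v = {a \<in> E. fst a = v}"

definition valid_instance :: "('n, 'k) sndrr \<Rightarrow> bool" where
  "valid_instance I \<longleftrightarrow>
     finite (nodes I) \<and> finite (arcs I) \<and> arcs I \<subseteq> nodes I \<times> nodes I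
   \<and> finite (comms I) \<and> comms I \<noteq> {}
   \<and> (\<forall>a \<in> arcs I. tau I a > 0 \<and> fcost I a > 0 \<and> cap I a > 0
        \<and> (\<forall>k \<in> comms I. ucost I k a > 0))
   \<and> (\<exists>k \<in> comms I. rel I k = 0)
   \<and> (\<forall>k \<in> comms I.
        dem I k > 0
      \<and> Nk I k \<subseteq> nodes I \<and> Ak I k \<subseteq> arcs I \<and> Ak I k \<subseteq> Nk I k \<times> Nk I k
      \<and> orig I k \<in> Nk I k \<and> dest I k \<in> Nk I k
      \<and> out_arcs (Ak I k) (dest I k) = {}
      \<and> (\<forall>v \<in> Nk I k - {dest I k}. out_arcs (Ak I k) v \<noteq> {}))"

definition horizon :: "('n, 'k) sndrr \<Rightarrow> nat" where
  "horizon I = Max (dl I ` comms I)"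

text \<open>A candidate solution is a pair (x, y); x k a is the variable x^k_a, y a the variable y_a.
  Entries outside the variable index sets are required to be 0 (so that solutions are
  exactly the assignments to the IP's variables).\<close>

definition AT :: "('n, 'k) sndrr \<Rightarrow> 'n tarc set" where
  "AT I = mv_arcs (arcs I) (tau I) (horizon I)"

definition DkT :: "('n, 'k) sndrr \<Rightarrow> 'k \<Rightarrow> 'n tarc set" where
  "DkT I k = tarcs (Nk I k) (Ak I k) (tau I) (horizon I)"

definition feasD :: "('n, 'k) sndrr \<Rightarrow> (('k \<Rightarrow> 'n tarc \<Rightarrow> int) \<times> ('n tarc \<Rightarrow> int)) set" where
  "feasD I = {(x, y).
     (\<forall>k a. (k \<notin> comms I \<or> a \<notin> DkT I k) \<longrightarrow> x k a = 0)
   \<and> (\<forall>a. a \<notin> AT I \<longrightarrow> y a = 0)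
   \<and> (\<forall>k \<in> comms I. flow_cons (Nk I k) (Ak I k) (tau I) (horizon I)
                       (orig I k, rel I k) (dest I k, dl I k) (x k))
   \<and> (\<forall>a \<in> AT I. (\<Sum>k \<in> comms I. dem I k * of_int (x k a))
                     \<le> of_nat (cap I (flat_arc a)) * of_int (y a))
   \<and> (\<forall>k \<in> comms I. \<forall>a \<in> DkT I k. x k a \<in> {0, 1})
   \<and> (\<forall>a \<in> AT I. y a \<ge> 0)}"

definition objD :: "('n, 'k) sndrr \<Rightarrow> ('k \<Rightarrow> 'n tarc \<Rightarrow> int) \<times> ('n tarc \<Rightarrow> int) \<Rightarrow> real" where
  "objD I s = (case s of (x, y) \<Rightarrow>
     (\<Sum>a \<in> AT I. fcost I (flat_arc a) * of_int (y a))
   + (\<Sum>a \<in> AT I. \<Sum>k \<in> comms I. ucost I k (flat_arc a) * dem I k * of_int (x k a)))"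

definition nvarsD :: "('n, 'k) sndrr \<Rightarrow> nat" where
  "nvarsD I = card (Sigma (comms I) (DkT I)) + card (AT I)"

definition nconsD :: "('n, 'k) sndrr \<Rightarrow> nat" where
  "nconsD I = card (Sigma (comms I) (\<lambda>k. tnodes (Nk I k) (horizon I))) + card (AT I)"

text \<open>Node copies: (v, None) is the terminal copy v^0, (v, Some B) the copy v^i for part B = A_i.\<close>

type_synonym 'n copy = "'n \<times> ('n \<times> 'n) set option"

definition valid_partition :: "('n, 'k) sndrr \<Rightarrow> ('n \<Rightarrow> ('n \<times> 'n) set set) \<Rightarrow> bool" where
  "valid_partition I P \<longleftrightarrow>
     (\<forall>v \<in> nodes I.
        (\<forall>B \<in> P v. B \<noteq> {})
      \<and> (\<forall>B \<in> P v. \<forall>B' \<in> P v. B \<noteq> B' \<longrightarrow> B \<inter> B' = {})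
      \<and> \<Union>(P v) = out_arcs (arcs I) v
      \<and> (\<forall>k \<in> comms I. out_arcs (Ak I k) v \<noteq> {} \<longrightarrow>
            (\<exists>B \<in> P v. out_arcs (Ak I k) v \<subseteq> B)))"

definition GV :: "('n, 'k) sndrr \<Rightarrow> ('n \<Rightarrow> ('n \<times> 'n) set set) \<Rightarrow> 'n copy set" where
  "GV I P = {(v, None) | v. v \<in> nodes I} \<union> {(v, Some B) | v B. v \<in> nodes I \<and> B \<in> P v}"

definition GE :: "('n, 'k) sndrr \<Rightarrow> ('n \<Rightarrow> ('n \<times> 'n) set set) \<Rightarrow> ('n copy \<times> 'n copy) set" where
  "GE I P = {((v, Some B), (w, j)) | v w B j.
               v \<in> nodes I \<and> B \<in> P v \<and> (v, w) \<in> B \<and> (w, j) \<in> GV I P}"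

definition proj :: "'n copy \<times> 'n copy \<Rightarrow> 'n \<times> 'n" where
  "proj e = (fst (fst e), fst (snd e))"

definition tauG :: "('n, 'k) sndrr \<Rightarrow> 'n copy \<times> 'n copy \<Rightarrow> nat" where
  "tauG I e = tau I (proj e)"

definition Kpart :: "('n, 'k) sndrr \<Rightarrow> 'n \<Rightarrow> ('n \<times> 'n) set \<Rightarrow> 'k set" where
  "Kpart I v B = {k \<in> comms I. out_arcs (Ak I k) v \<noteq> {} \<and> out_arcs (Ak I k) v \<subseteq> B}"

definition GVk :: "('n, 'k) sndrr \<Rightarrow> ('n \<Rightarrow> ('n \<times> 'n) set set) \<Rightarrow> 'k \<Rightarrow> 'n copy set" where
  "GVk I P k = {(v, Some B) | v B. v \<in> Nk I k \<and> B \<in> P v \<and> k \<in> Kpart I v B}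
               \<union> {(dest I k, None)}"

definition GEk :: "('n, 'k) sndrr \<Rightarrow> ('n \<Rightarrow> ('n \<times> 'n) set set) \<Rightarrow> 'k \<Rightarrow> ('n copy \<times> 'n copy) set" where
  "GEk I P k = {((v, i), (w, j)) | v i w j.
                 (v, w) \<in> Ak I k \<and> (v, i) \<in> GVk I P k \<and> (w, j) \<in> GVk I P k}"

definition origG :: "('n, 'k) sndrr \<Rightarrow> ('n \<Rightarrow> ('n \<times> 'n) set set) \<Rightarrow> 'k \<Rightarrow> 'n copy" where
  "origG I P k = (THE c. c \<in> GVk I P k \<and> fst c = orig I k)"

definition ET :: "('n, 'k) sndrr \<Rightarrow> ('n \<Rightarrow> ('n \<times> 'n) set set) \<Rightarrow> 'n copy tarc set" where
  "ET I P = mv_arcs (GE I P) (tauG I) (horizon I)"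

definition ETof :: "('n, 'k) sndrr \<Rightarrow> ('n \<Rightarrow> ('n \<times> 'n) set set) \<Rightarrow> 'n tarc \<Rightarrow> 'n copy tarc set" where
  "ETof I P a = (case a of
      Inl ((v, w), t) \<Rightarrow>
        {Inl (((v, Some B), (w, j)), t) | B j. B \<in> P v \<and> (v, w) \<in> B \<and> (w, j) \<in> GV I P}
    | Inr _ \<Rightarrow> {})"

definition GkT :: "('n, 'k) sndrr \<Rightarrow> ('n \<Rightarrow> ('n \<times> 'n) set set) \<Rightarrow> 'k \<Rightarrow> 'n copy tarc set" where
  "GkT I P k = tarcs (GVk I P k) (GEk I P k) (tauG I) (horizon I)"

definition feasG :: "('n, 'k) sndrr \<Rightarrow> ('n \<Rightarrow> ('n \<times> 'n) set set)
     \<Rightarrow> (('k \<Rightarrow> 'n copy tarc \<Rightarrow> int) \<times> ('n tarc \<Rightarrow> int)) set" where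
  "feasG I P = {(x, y).
     (\<forall>k e. (k \<notin> comms I \<or> e \<notin> GkT I P k) \<longrightarrow> x k e = 0)
   \<and> (\<forall>a. a \<notin> AT I \<longrightarrow> y a = 0)
   \<and> (\<forall>k \<in> comms I. flow_cons (GVk I P k) (GEk I P k) (tauG I) (horizon I)
                       (origG I P k, rel I k) ((dest I k, None), dl I k) (x k))
   \<and> (\<forall>a \<in> AT I. (\<Sum>k \<in> comms I. \<Sum>e \<in> ETof I P a. dem I k * of_int (x k e))
                     \<le> of_nat (cap I (flat_arc a)) * of_int (y a))
   \<and> (\<forall>k \<in> comms I. \<forall>e \<in> GkT I P k. x k e \<in> {0, 1})
   \<and> (\<forall>a \<in> AT I. y a \<ge> 0)}"

definition objG :: "('n, 'k) sndrr \<Rightarrow> ('n \<Rightarrow> ('n \<times> 'n) set set)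
     \<Rightarrow> ('k \<Rightarrow> 'n copy tarc \<Rightarrow> int) \<times> ('n tarc \<Rightarrow> int) \<Rightarrow> real" where
  "objG I P s = (case s of (x, y) \<Rightarrow>
     (\<Sum>a \<in> AT I. fcost I (flat_arc a) * of_int (y a))
   + (\<Sum>k \<in> comms I. \<Sum>e \<in> ET I P. ucost I k (proj (flat_arc e)) * dem I k * of_int (x k e)))"

definition nvarsG :: "('n, 'k) sndrr \<Rightarrow> ('n \<Rightarrow> ('n \<times> 'n) set set) \<Rightarrow> nat" where
  "nvarsG I P = card (Sigma (comms I) (GkT I P)) + card (AT I)"

definition nconsG :: "('n, 'k) sndrr \<Rightarrow> ('n \<Rightarrow> ('n \<times> 'n) set set) \<Rightarrow> nat" where
  "nconsG I P = card (Sigma (comms I) (\<lambda>k. tnodes (GVk I P k) (horizon I))) + card (AT I)"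

end

theory Submission
  imports Defs
begin

lemma bij_betw_restrict_pred:
  assumes "bij_betw f A B" "\<And>a. a \<in> A \<Longrightarrow> P a \<longleftrightarrow> Q (f a)"
  shows "bij_betw f {a\<in>A. P a} {b\<in>B. Q b}"
proof -
  have "inj_on f {a\<in>A. P a}" using assms(1) by (auto simp: bij_betw_def intro: inj_on_subset)
  moreover have "f ` {a\<in>A. P a} = {b\<in>B. Q b}" using assms by (force simp: bij_betw_def)
  ultimately show ?thesis by (simp add: bij_betw_def)
qed

fun tpi :: "'n copy tarc \<Rightarrow> 'n tarc" where
  "tpi (Inl (e, t)) = Inl (proj e, t)"
| "tpi (Inr (c, t)) = Inr (fst c, t)"

lemma ttail_tpi: "ttail (tpi a) = apfst fst (ttail a)"
  by (cases a rule: ttail.cases) (auto simp: proj_def)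

lemma thead_tpi: assumes "\<And>e. tt' e = tt (proj e)"
  shows "thead tt (tpi a) = apfst fst (thead tt' a)"
  using assms by (cases a rule: ttail.cases) (auto simp: proj_def)

lemma tpi_bij:
  fixes V' :: "'n copy set" and V :: "'n set"
  assumes inj: "inj_on fst V'" and V: "fst ` V' = V" and EV: "E' \<subseteq> V' \<times> V'" and E: "proj ` E' = E"
    and tt': "\<And>e. tt' e = tt (proj e)"
  shows "bij_betw tpi (tarcs V' E' tt' T) (tarcs V E tt T)"
proof -
  have injE: "inj_on proj E'"
  proof (rule inj_onI)
    fix a b assume "a \<in> E'" "b \<in> E'" "proj a = proj b"
    then obtain a1 a2 b1 b2 where ab: "a = (a1, a2)" "b = (b1, b2)" by (cases a, cases b)
    then have "a1 \<in> V'" "a2 \<in> V'" "b1 \<in> V'" "b2 \<in> V'" using EV \<open>a \<in> E'\<close> \<open>b \<in> E'\<close> by auto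
    moreover have "fst a1 = fst b1" "fst a2 = fst b2" using \<open>proj a = proj b\<close> ab by (auto simp: proj_def)
    ultimately show "a = b" using inj ab by (simp add: inj_on_eq_iff)
  qed
  have "inj_on tpi (tarcs V' E' tt' T)"
  proof (rule inj_onI)
    fix a b assume a: "a \<in> tarcs V' E' tt' T" and b: "b \<in> tarcs V' E' tt' T" and ab: "tpi a = tpi b"
    show "a = b"
    proof (cases a rule: ttail.cases)
      case (1 v w t)
      then have av: "(v, w) \<in> E'" using a by (auto simp: tarcs_def mv_arcs_def hold_arcs_def)
      show ?thesis
      proof (cases b rule: ttail.cases)
        case (1 v' w' t')
        then have "(v', w') \<in> E'" using b by (auto simp: tarcs_def mv_arcs_def hold_arcs_def)
        moreover have "proj (v, w) = proj (v', w')" "t = t'" using ab 1 \<open>a = _\<close> by auto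
        ultimately show ?thesis using injE av 1 \<open>a = _\<close> by (simp add: inj_on_eq_iff)
      next
        case (2 v' t')
        then show ?thesis using ab \<open>a = _\<close> by simp
      qed
    next
      case (2 v t)
      then have av: "v \<in> V'" using a by (auto simp: tarcs_def mv_arcs_def hold_arcs_def)
      show ?thesis
      proof (cases b rule: ttail.cases)
        case (2 v' t')
        then have "v' \<in> V'" using b by (auto simp: tarcs_def mv_arcs_def hold_arcs_def)
        moreover have "fst v = fst v'" "t = t'" using ab 2 \<open>a = _\<close> by auto
        ultimately show ?thesis using inj av 2 \<open>a = _\<close> by (simp add: inj_on_eq_iff)
      next
        case (1 v' w' t')
        then show ?thesis using ab \<open>a = _\<close> by simp
      qed
    qed
  qed
  moreover have "tpi ` tarcs V' E' tt' T = tarcs V E tt T"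
  proof
    show "tpi ` tarcs V' E' tt' T \<subseteq> tarcs V E tt T"
    proof
      fix b assume "b \<in> tpi ` tarcs V' E' tt' T"
      then obtain a where a: "a \<in> tarcs V' E' tt' T" "b = tpi a" by auto
      show "b \<in> tarcs V E tt T"
      proof (cases a rule: ttail.cases)
        case (1 v w t)
        then have "(v, w) \<in> E'" "t + tt' (v, w) \<le> T" using a by (auto simp: tarcs_def mv_arcs_def hold_arcs_def)
        then have "proj (v, w) \<in> E" "t + tt (proj (v, w)) \<le> T" using E tt' by auto
        then show ?thesis using a 1 by (auto simp: tarcs_def mv_arcs_def)
      next
        case (2 v t)
        then have "v \<in> V'" "t + 1 \<le> T" using a by (auto simp: tarcs_def mv_arcs_def hold_arcs_def)
        then have "fst v \<in> V" using V by auto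
        then show ?thesis using a 2 \<open>t + 1 \<le> T\<close> by (auto simp: tarcs_def hold_arcs_def)
      qed
    qed
  next
    show "tarcs V E tt T \<subseteq> tpi ` tarcs V' E' tt' T"
    proof
      fix a assume a: "a \<in> tarcs V E tt T"
      show "a \<in> tpi ` tarcs V' E' tt' T"
      proof (cases a)
        case (Inl p)
        then obtain e t where p: "a = Inl (e, t)" "e \<in> E" "t + tt e \<le> T"
          using a by (auto simp: tarcs_def mv_arcs_def hold_arcs_def)
        then obtain e' where "e' \<in> E'" "proj e' = e" using E by auto
        then have "Inl (e', t) \<in> tarcs V' E' tt' T" "tpi (Inl (e', t)) = a"
          using p by (auto simp: tarcs_def mv_arcs_def tt')
        then show ?thesis by (metis image_eqI)
      next
        case (Inr p)
        then obtain v t where p: "a = Inr (v, t)" "v \<in> V" "t + 1 \<le> T"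
          using a by (auto simp: tarcs_def mv_arcs_def hold_arcs_def)
        then obtain c where "c \<in> V'" "fst c = v" using V by auto
        then have "Inr (c, t) \<in> tarcs V' E' tt' T" "tpi (Inr (c, t)) = a"
          using p by (auto simp: tarcs_def hold_arcs_def)
        then show ?thesis by (metis image_eqI)
      qed
    qed
  qed
  ultimately show ?thesis by (simp add: bij_betw_def)
qed

lemma tarcs_ends:
  assumes "E' \<subseteq> V' \<times> V'" "a \<in> tarcs V' E' tt' T"
  shows "ttail a \<in> V' \<times> UNIV" "thead tt' a \<in> V' \<times> UNIV"
  using assms by (auto simp: tarcs_def mv_arcs_def hold_arcs_def)

lemma flow_transfer:
  fixes V' :: "'n copy set" and V :: "'n set"
  assumes inj: "inj_on fst V'" and V: "fst ` V' = V" and EV: "E' \<subseteq> V' \<times> V'" and E: "proj ` E' = E"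
    and tt': "\<And>e. tt' e = tt (proj e)"
    and src: "fst src' \<in> V'" and snk: "fst snk' \<in> V'"
    and hx: "\<And>e. e \<in> tarcs V' E' tt' T \<Longrightarrow> x' e = x (tpi e)"
  shows "flow_cons V' E' tt' T src' snk' x' \<longleftrightarrow> flow_cons V E tt T (apfst fst src') (apfst fst snk') x"
proof -
  let ?S' = "tarcs V' E' tt' T" and ?S = "tarcs V E tt T"
  have bij: "bij_betw tpi ?S' ?S" using tpi_bij[OF inj V EV E, of tt' tt] tt' by blast
  have injp: "inj_on (apfst fst) (V' \<times> (UNIV :: nat set))"
    using inj by (auto simp: inj_on_def)
  define F' where "F' p = ((\<Sum>a \<in> {a \<in> ?S'. ttail a = p}. x' a)
      - (\<Sum>a \<in> {a \<in> ?S'. thead tt' a = p}. x' a)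
      = (if p = src' then 1 else if p = snk' then -1 else (0::int)))" for p
  define F where "F q = ((\<Sum>a \<in> {a \<in> ?S. ttail a = q}. x a)
      - (\<Sum>a \<in> {a \<in> ?S. thead tt a = q}. x a)
      = (if q = apfst fst src' then 1 else if q = apfst fst snk' then -1 else (0::int)))" for q
  have key: "F' p = F (apfst fst p)" if p: "p \<in> tnodes V' T" for p
  proof -
    have pV: "p \<in> V' \<times> UNIV" using p by (auto simp: tnodes_def)
    have b1: "bij_betw tpi {a \<in> ?S'. ttail a = p} {a \<in> ?S. ttail a = apfst fst p}"
    proof (rule bij_betw_restrict_pred[OF bij])
      fix a assume "a \<in> ?S'"
      then have "ttail a \<in> V' \<times> UNIV" using tarcs_ends[OF EV] by blast
      then show "ttail a = p \<longleftrightarrow> ttail (tpi a) = apfst fst p"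
        unfolding ttail_tpi using inj_on_eq_iff[OF injp \<open>ttail a \<in> _\<close> pV] by simp
    qed
    have b2: "bij_betw tpi {a \<in> ?S'. thead tt' a = p} {a \<in> ?S. thead tt a = apfst fst p}"
    proof (rule bij_betw_restrict_pred[OF bij])
      fix a assume "a \<in> ?S'"
      then have "thead tt' a \<in> V' \<times> UNIV" using tarcs_ends[OF EV] by blast
      then show "thead tt' a = p \<longleftrightarrow> thead tt (tpi a) = apfst fst p"
        unfolding thead_tpi[of tt' tt, OF tt'] using inj_on_eq_iff[OF injp \<open>thead tt' a \<in> _\<close> pV] by simp
    qed
    have s1: "(\<Sum>a \<in> {a \<in> ?S'. ttail a = p}. x' a) = (\<Sum>a \<in> {a \<in> ?S. ttail a = apfst fst p}. x a)"
    proof -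
      have "(\<Sum>a \<in> {a \<in> ?S'. ttail a = p}. x' a) = (\<Sum>a \<in> {a \<in> ?S'. ttail a = p}. x (tpi a))"
        using hx by (intro sum.cong) auto
      also have "\<dots> = (\<Sum>a \<in> {a \<in> ?S. ttail a = apfst fst p}. x a)"
        by (rule sum.reindex_bij_betw[OF b1])
      finally show ?thesis .
    qed
    have s2: "(\<Sum>a \<in> {a \<in> ?S'. thead tt' a = p}. x' a) = (\<Sum>a \<in> {a \<in> ?S. thead tt a = apfst fst p}. x a)"
    proof -
      have "(\<Sum>a \<in> {a \<in> ?S'. thead tt' a = p}. x' a) = (\<Sum>a \<in> {a \<in> ?S'. thead tt' a = p}. x (tpi a))"
        using hx by (intro sum.cong) auto
      also have "\<dots> = (\<Sum>a \<in> {a \<in> ?S. thead tt a = apfst fst p}. x a)"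
        by (rule sum.reindex_bij_betw[OF b2])
      finally show ?thesis .
    qed
    have e1: "(p = src') \<longleftrightarrow> (apfst fst p = apfst fst src')"
      using inj_on_eq_iff[OF injp pV, of src'] src by (cases src') auto
    have e2: "(p = snk') \<longleftrightarrow> (apfst fst p = apfst fst snk')"
      using inj_on_eq_iff[OF injp pV, of snk'] snk by (cases snk') auto
    show ?thesis unfolding F'_def F_def s1 s2 e1 e2 ..
  qed
  have tn: "tnodes V T = apfst fst ` tnodes V' T"
    using V by (force simp: tnodes_def)
  have "flow_cons V' E' tt' T src' snk' x' \<longleftrightarrow> (\<forall>p \<in> tnodes V' T. F' p)"
    unfolding flow_cons_def F'_def ..
  also have "\<dots> \<longleftrightarrow> (\<forall>p \<in> tnodes V' T. F (apfst fst p))" using key by auto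
  also have "\<dots> \<longleftrightarrow> (\<forall>q \<in> tnodes V T. F q)" unfolding tn by auto
  also have "\<dots> \<longleftrightarrow> flow_cons V E tt T (apfst fst src') (apfst fst snk') x"
    unfolding flow_cons_def F_def ..
  finally show ?thesis .
qed

lemma mv_Inl[simp]: "Inl (e, t) \<in> mv_arcs E tt T \<longleftrightarrow> e \<in> E \<and> t + tt e \<le> T"
  by (auto simp: mv_arcs_def)
lemma mv_Inr[simp]: "Inr p \<notin> mv_arcs E tt T"
  by (auto simp: mv_arcs_def)
lemma tarcs_Inl[simp]: "Inl (e, t) \<in> tarcs V E tt T \<longleftrightarrow> e \<in> E \<and> t + tt e \<le> T"
  by (auto simp: tarcs_def hold_arcs_def)
lemma tarcs_Inr[simp]: "Inr (v, t) \<in> tarcs V E tt T \<longleftrightarrow> v \<in> V \<and> t + 1 \<le> T"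
  by (auto simp: tarcs_def hold_arcs_def)


lemma bij_Sigma:
  assumes "\<And>k. k \<in> K \<Longrightarrow> bij_betw f (A k) (B k)"
  shows "bij_betw (\<lambda>(k, e). (k, f e)) (Sigma K A) (Sigma K B)"
proof -
  have "inj_on (\<lambda>(k, e). (k, f e)) (Sigma K A)"
    using assms by (auto simp: inj_on_def bij_betw_def)
  moreover have "(\<lambda>(k, e). (k, f e)) ` (Sigma K A) = Sigma K B"
    using assms by (force simp: bij_betw_def)
  ultimately show ?thesis by (simp add: bij_betw_def)
qed

locale inst =
  fixes I :: "('n, 'k) sndrr" and P :: "'n \<Rightarrow> ('n \<times> 'n) set set"
  assumes vi: "valid_instance I" and vp: "valid_partition I P"
begin

lemma vik: assumes "k \<in> comms I"
  shows "Nk I k \<subseteq> nodes I \<and> Ak I k \<subseteq> arcs I \<and> Ak I k \<subseteq> Nk I k \<times> Nk I k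
      \<and> orig I k \<in> Nk I k \<and> dest I k \<in> Nk I k
      \<and> out_arcs (Ak I k) (dest I k) = {}
      \<and> (\<forall>v \<in> Nk I k - {dest I k}. out_arcs (Ak I k) v \<noteq> {})"
proof -
  have "\<forall>k \<in> comms I.
        dem I k > 0
      \<and> Nk I k \<subseteq> nodes I \<and> Ak I k \<subseteq> arcs I \<and> Ak I k \<subseteq> Nk I k \<times> Nk I k
      \<and> orig I k \<in> Nk I k \<and> dest I k \<in> Nk I k
      \<and> out_arcs (Ak I k) (dest I k) = {}
      \<and> (\<forall>v \<in> Nk I k - {dest I k}. out_arcs (Ak I k) v \<noteq> {})"
    using vi unfolding valid_instance_def by (elim conjE) assumption
  then show ?thesis using assms by blast
qed

lemma Nk_nodes: "k \<in> comms I \<Longrightarrow> Nk I k \<subseteq> nodes I"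
  using vik by blast

lemma Ak_sub: "k \<in> comms I \<Longrightarrow> Ak I k \<subseteq> Nk I k \<times> Nk I k"
  using vik by blast

lemma Ak_arcs: "k \<in> comms I \<Longrightarrow> Ak I k \<subseteq> arcs I"
  using vik by blast

lemma dest_out: "k \<in> comms I \<Longrightarrow> out_arcs (Ak I k) (dest I k) = {}"
  using vik by blast

lemma nondest_out: "k \<in> comms I \<Longrightarrow> v \<in> Nk I k \<Longrightarrow> v \<noteq> dest I k \<Longrightarrow> out_arcs (Ak I k) v \<noteq> {}"
  using vik by blast

lemma orig_Nk: "k \<in> comms I \<Longrightarrow> orig I k \<in> Nk I k"
  using vik by blast

lemma dest_Nk: "k \<in> comms I \<Longrightarrow> dest I k \<in> Nk I k"
  using vik by blast

lemma arcs_nodes: "arcs I \<subseteq> nodes I \<times> nodes I"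
  using vi unfolding valid_instance_def by blast

lemma fin_basic: "finite (nodes I)" "finite (arcs I)" "finite (comms I)"
  using vi unfolding valid_instance_def by blast+

lemma vpv: assumes "v \<in> nodes I"
  shows "(\<forall>B \<in> P v. B \<noteq> {})
      \<and> (\<forall>B \<in> P v. \<forall>B' \<in> P v. B \<noteq> B' \<longrightarrow> B \<inter> B' = {})
      \<and> \<Union>(P v) = out_arcs (arcs I) v
      \<and> (\<forall>k \<in> comms I. out_arcs (Ak I k) v \<noteq> {} \<longrightarrow>
            (\<exists>B \<in> P v. out_arcs (Ak I k) v \<subseteq> B))"
proof -
  have "\<forall>v \<in> nodes I. (\<forall>B \<in> P v. B \<noteq> {})
      \<and> (\<forall>B \<in> P v. \<forall>B' \<in> P v. B \<noteq> B' \<longrightarrow> B \<inter> B' = {})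
      \<and> \<Union>(P v) = out_arcs (arcs I) v
      \<and> (\<forall>k \<in> comms I. out_arcs (Ak I k) v \<noteq> {} \<longrightarrow>
            (\<exists>B \<in> P v. out_arcs (Ak I k) v \<subseteq> B))"
    using vp unfolding valid_partition_def .
  then show ?thesis using assms by (rule bspec)
qed

lemma vp_disj: "v \<in> nodes I \<Longrightarrow> B \<in> P v \<Longrightarrow> B' \<in> P v \<Longrightarrow> B \<inter> B' \<noteq> {} \<Longrightarrow> B = B'"
  using vpv by blast

lemma vp_ex: "v \<in> nodes I \<Longrightarrow> k \<in> comms I \<Longrightarrow> out_arcs (Ak I k) v \<noteq> {} \<Longrightarrow> \<exists>B \<in> P v. out_arcs (Ak I k) v \<subseteq> B"
  using vpv by blast

lemma vp_un: "v \<in> nodes I \<Longrightarrow> \<Union>(P v) = out_arcs (arcs I) v"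
  using vpv by simp

lemma GVk_iff: "c \<in> GVk I P k \<longleftrightarrow> c = (dest I k, None) \<or>
   (\<exists>v B. c = (v, Some B) \<and> v \<in> Nk I k \<and> B \<in> P v \<and> k \<in> Kpart I v B)"
  unfolding GVk_def by auto

lemma GVk_fst: assumes k: "k \<in> comms I" shows "fst ` GVk I P k = Nk I k"
proof
  show "fst ` GVk I P k \<subseteq> Nk I k" using dest_Nk[OF k] by (auto simp: GVk_iff)
next
  show "Nk I k \<subseteq> fst ` GVk I P k"
  proof
    fix v assume v: "v \<in> Nk I k"
    show "v \<in> fst ` GVk I P k"
    proof (cases "v = dest I k")
      case True
      then have "(v, None) \<in> GVk I P k" by (simp add: GVk_iff)
      then show ?thesis by (metis fst_conv image_eqI)
    next
      case False
      then have ne: "out_arcs (Ak I k) v \<noteq> {}" using nondest_out[OF k v] by simp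
      have "v \<in> nodes I" using v Nk_nodes[OF k] by auto
      then obtain B where "B \<in> P v" "out_arcs (Ak I k) v \<subseteq> B"
        using vp_ex ne k by blast
      then have "k \<in> Kpart I v B" using ne k by (simp add: Kpart_def)
      then have "(v, Some B) \<in> GVk I P k" using v \<open>B \<in> P v\<close> by (simp add: GVk_iff)
      then show ?thesis by (metis fst_conv image_eqI)
    qed
  qed
qed

lemma GVk_inj: assumes k: "k \<in> comms I" shows "inj_on fst (GVk I P k)"
proof (rule inj_onI)
  fix a b assume a: "a \<in> GVk I P k" and b: "b \<in> GVk I P k" and ab: "fst a = fst b"
  have nK: "k \<notin> Kpart I (dest I k) B" for B using dest_out[OF k] by (simp add: Kpart_def)
  show "a = b"
  proof (cases "a = (dest I k, None)")
    case True
    then show ?thesis using b ab nK unfolding GVk_iff by auto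
  next
    case False
    then obtain v B where av: "a = (v, Some B)" "v \<in> Nk I k" "B \<in> P v" "k \<in> Kpart I v B"
      using a unfolding GVk_iff by blast
    then have ne: "out_arcs (Ak I k) v \<noteq> {}" "out_arcs (Ak I k) v \<subseteq> B" by (auto simp: Kpart_def)
    have "v \<noteq> dest I k" using av nK by auto
    then obtain B' where bv: "b = (v, Some B')" "B' \<in> P v" "k \<in> Kpart I v B'"
      using b ab av unfolding GVk_iff by auto
    then have "out_arcs (Ak I k) v \<subseteq> B'" by (auto simp: Kpart_def)
    then have "B \<inter> B' \<noteq> {}" using ne by auto
    moreover have "v \<in> nodes I" using av Nk_nodes[OF k] by auto
    ultimately have "B = B'" using vp_disj av bv by blast
    then show ?thesis using av bv by simp
  qed
qed

lemma GEk_iff: "e \<in> GEk I P k \<longleftrightarrow> proj e \<in> Ak I k \<and> fst e \<in> GVk I P k \<and> snd e \<in> GVk I P k"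
proof
  assume "e \<in> GEk I P k"
  then obtain v i w j where "e = ((v, i), (w, j))" "(v, w) \<in> Ak I k" "(v, i) \<in> GVk I P k" "(w, j) \<in> GVk I P k"
    unfolding GEk_def mem_Collect_eq by (elim exE conjE) blast
  then show "proj e \<in> Ak I k \<and> fst e \<in> GVk I P k \<and> snd e \<in> GVk I P k" by (simp add: proj_def)
next
  assume h: "proj e \<in> Ak I k \<and> fst e \<in> GVk I P k \<and> snd e \<in> GVk I P k"
  obtain v i w j where "e = ((v, i), (w, j))" by (metis prod.collapse)
  then show "e \<in> GEk I P k" using h unfolding GEk_def proj_def by simp
qed

lemma GEk_sub: "GEk I P k \<subseteq> GVk I P k \<times> GVk I P k"
proof
  fix e assume "e \<in> GEk I P k"
  then show "e \<in> GVk I P k \<times> GVk I P k" unfolding GEk_iff by (cases e) simp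
qed

lemma GEk_proj: assumes k: "k \<in> comms I" shows "proj ` GEk I P k = Ak I k"
proof
  show "proj ` GEk I P k \<subseteq> Ak I k" by (auto simp: GEk_iff)
next
  show "Ak I k \<subseteq> proj ` GEk I P k"
  proof
    fix e assume e: "e \<in> Ak I k"
    obtain v w where vw0: "e = (v, w)" by (cases e)
    then have vw: "e = (v, w)" "v \<in> Nk I k" "w \<in> Nk I k" using Ak_sub[OF k] e by blast+
    have "v \<in> fst ` GVk I P k" "w \<in> fst ` GVk I P k" using GVk_fst[OF k] vw by simp_all
    then obtain c d where "c \<in> GVk I P k" "fst c = v" "d \<in> GVk I P k" "fst d = w"
      by (elim imageE) simp
    then have "proj (c, d) = e" using vw by (simp add: proj_def)
    then have "(c, d) \<in> GEk I P k" using e \<open>c \<in> _\<close> \<open>d \<in> _\<close> by (simp add: GEk_iff)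
    then show "e \<in> proj ` GEk I P k" using \<open>proj (c, d) = e\<close>[symmetric] by (rule rev_image_eqI)
  qed
qed

lemma origG_prop: assumes k: "k \<in> comms I"
  shows "origG I P k \<in> GVk I P k \<and> fst (origG I P k) = orig I k"
proof -
  have "orig I k \<in> fst ` GVk I P k" using GVk_fst[OF k] orig_Nk[OF k] by simp
  then obtain c where c: "c \<in> GVk I P k" "fst c = orig I k" by (elim imageE) simp
  have "\<exists>!c. c \<in> GVk I P k \<and> fst c = orig I k"
  proof (rule ex1I)
    show "c \<in> GVk I P k \<and> fst c = orig I k" using c by simp
  next
    fix c' assume "c' \<in> GVk I P k \<and> fst c' = orig I k"
    then show "c' = c" using c inj_onD[OF GVk_inj[OF k]] by metis
  qed
  then show ?thesis unfolding origG_def by (rule theI')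
qed

lemma dest_GVk: "(dest I k, None) \<in> GVk I P k"
  by (simp add: GVk_iff)

lemma GV_iff: "c \<in> GV I P \<longleftrightarrow> fst c \<in> nodes I \<and> (snd c = None \<or> (\<exists>B. snd c = Some B \<and> B \<in> P (fst c)))"
  unfolding GV_def by (cases c) auto

lemma GE_iff: "e \<in> GE I P \<longleftrightarrow> fst (fst e) \<in> nodes I \<and> (\<exists>B. snd (fst e) = Some B \<and> B \<in> P (fst (fst e))
    \<and> proj e \<in> B) \<and> snd e \<in> GV I P"
proof
  assume "e \<in> GE I P"
  then obtain v w B j where "e = ((v, Some B), (w, j))" "v \<in> nodes I" "B \<in> P v" "(v, w) \<in> B" "(w, j) \<in> GV I P"
    unfolding GE_def mem_Collect_eq by (elim exE conjE) blast
  then show "fst (fst e) \<in> nodes I \<and> (\<exists>B. snd (fst e) = Some B \<and> B \<in> P (fst (fst e))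
    \<and> proj e \<in> B) \<and> snd e \<in> GV I P" by (simp add: proj_def)
next
  assume h: "fst (fst e) \<in> nodes I \<and> (\<exists>B. snd (fst e) = Some B \<and> B \<in> P (fst (fst e))
    \<and> proj e \<in> B) \<and> snd e \<in> GV I P"
  then obtain B where B: "snd (fst e) = Some B" "B \<in> P (fst (fst e))" "proj e \<in> B" by blast
  obtain v i w j where e: "e = ((v, i), (w, j))" by (metis prod.collapse)
  show "e \<in> GE I P" using h B unfolding e GE_def proj_def by simp
qed

lemma GVk_GV: assumes k: "k \<in> comms I" shows "GVk I P k \<subseteq> GV I P"
proof
  fix c assume "c \<in> GVk I P k"
  then show "c \<in> GV I P" using Nk_nodes[OF k] dest_Nk[OF k] unfolding GVk_iff GV_iff by auto
qed

lemma GEk_GE: assumes k: "k \<in> comms I" shows "GEk I P k \<subseteq> GE I P"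
proof
  fix e assume e: "e \<in> GEk I P k"
  obtain v i w j where ev0: "e = ((v, i), (w, j))" by (metis prod.collapse)
  then have ev: "(v, w) \<in> Ak I k" "(v, i) \<in> GVk I P k" "(w, j) \<in> GVk I P k"
    using e unfolding GEk_iff by (simp_all add: proj_def)
  have "v \<noteq> dest I k" using ev dest_out[OF k] by (auto simp: out_arcs_def)
  then obtain B where B: "i = Some B" "v \<in> Nk I k" "B \<in> P v" "k \<in> Kpart I v B" using ev(2) unfolding GVk_iff by blast
  then have "(v, w) \<in> B" using ev by (auto simp: Kpart_def out_arcs_def)
  moreover have "v \<in> nodes I" using B Nk_nodes[OF k] by auto
  moreover have "(w, j) \<in> GV I P" using ev GVk_GV[OF k] by auto
  ultimately show "e \<in> GE I P" using ev0 B unfolding GE_iff by (simp add: proj_def)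
qed

lemma P_sub: assumes v: "v \<in> nodes I" shows "P v \<subseteq> Pow (arcs I)"
proof
  fix B assume "B \<in> P v"
  then have "B \<subseteq> \<Union>(P v)" by (rule Union_upper)
  also have "\<dots> = out_arcs (arcs I) v" using vp_un[OF v] .
  also have "\<dots> \<subseteq> arcs I" by (simp add: out_arcs_def)
  finally show "B \<in> Pow (arcs I)" by simp
qed

lemma finite_GV: "finite (GV I P)"
proof -
  have "GV I P \<subseteq> nodes I \<times> insert None (Some ` Pow (arcs I))"
  proof
    fix c assume "c \<in> GV I P"
    then have c: "fst c \<in> nodes I" "snd c = None \<or> (\<exists>B. snd c = Some B \<and> B \<in> P (fst c))"
      unfolding GV_iff by blast+
    have "snd c \<in> insert None (Some ` Pow (arcs I))"
    proof (cases "snd c")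
      case (Some B)
      then have "B \<in> P (fst c)" using c by auto
      then have "B \<in> Pow (arcs I)" using P_sub[OF c(1)] by blast
      then show ?thesis using Some by simp
    qed simp
    then show "c \<in> nodes I \<times> insert None (Some ` Pow (arcs I))"
      using c(1) by (cases c) simp
  qed
  moreover have "finite (nodes I \<times> insert None (Some ` Pow (arcs I)))"
    using fin_basic(1,2) by (intro finite_cartesian_product finite_insert[THEN iffD2] finite_imageI) (simp_all add: finite_Pow_iff)
  ultimately show ?thesis by (rule finite_subset)
qed

lemma finite_GE: "finite (GE I P)"
proof -
  have "GE I P \<subseteq> GV I P \<times> GV I P"
  proof
    fix e assume "e \<in> GE I P"
    then have "fst e \<in> GV I P" "snd e \<in> GV I P" unfolding GE_iff GV_iff by auto
    then show "e \<in> GV I P \<times> GV I P" by (cases e) simp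
  qed
  moreover have "finite (GV I P \<times> GV I P)" using finite_GV by simp
  ultimately show ?thesis by (rule finite_subset)
qed

lemma finite_mv: "finite E \<Longrightarrow> finite (mv_arcs E tt T :: 'a tarc set)"
proof -
  assume "finite E"
  have "mv_arcs E tt T \<subseteq> Inl ` (E \<times> {0..T})" by (auto simp: mv_arcs_def)
  moreover have "finite (Inl ` (E \<times> {0..T}) :: 'a tarc set)" using \<open>finite E\<close> by simp
  ultimately show ?thesis by (rule finite_subset)
qed

lemma finite_AT: "finite (AT I)"
  using fin_basic finite_mv by (auto simp: AT_def)

lemma finite_ET: "finite (ET I P)"
  using finite_GE finite_mv by (auto simp: ET_def)

lemma bij_k: assumes k: "k \<in> comms I" shows "bij_betw tpi (GkT I P k) (DkT I k)"
  unfolding GkT_def DkT_def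
  by (rule tpi_bij[OF GVk_inj[OF k] GVk_fst[OF k] GEk_sub GEk_proj[OF k], of "tauG I" "tau I"])
     (simp add: tauG_def)

lemma bij_nodes: assumes k: "k \<in> comms I"
  shows "bij_betw (apfst fst) (tnodes (GVk I P k) T) (tnodes (Nk I k) T)"
proof -
  have "inj_on (apfst fst) (tnodes (GVk I P k) T)"
    using GVk_inj[OF k] by (auto simp: inj_on_def tnodes_def)
  moreover have "apfst fst ` (tnodes (GVk I P k) T) = tnodes (Nk I k) T"
    using GVk_fst[OF k] by (force simp: tnodes_def)
  ultimately show ?thesis by (simp add: bij_betw_def)
qed

end

context inst begin

definition Rel :: "('k \<Rightarrow> 'n tarc \<Rightarrow> int) \<Rightarrow> ('k \<Rightarrow> 'n copy tarc \<Rightarrow> int) \<Rightarrow> bool" where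
  "Rel x x' \<longleftrightarrow> (\<forall>k a. (k \<notin> comms I \<or> a \<notin> DkT I k) \<longrightarrow> x k a = 0)
     \<and> (\<forall>k e. (k \<notin> comms I \<or> e \<notin> GkT I P k) \<longrightarrow> x' k e = 0)
     \<and> (\<forall>k \<in> comms I. \<forall>e \<in> GkT I P k. x' k e = x k (tpi e))"

lemma ETof_tpi: assumes "e \<in> ETof I P a" shows "tpi e = a"
proof (cases a rule: ttail.cases)
  case (1 v w t)
  then show ?thesis using assms by (auto simp: ETof_def proj_def)
next
  case (2 v t)
  then show ?thesis using assms by (simp add: ETof_def)
qed

lemma ETof_sub: assumes a: "a \<in> AT I" and k: "k \<in> comms I"
  shows "{e \<in> GkT I P k. tpi e = a} \<subseteq> ETof I P a"
proof
  fix e assume e: "e \<in> {e \<in> GkT I P k. tpi e = a}"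
  obtain v w t where av: "a = Inl ((v, w), t)" using a by (auto simp: AT_def mv_arcs_def)
  show "e \<in> ETof I P a"
  proof (cases e rule: ttail.cases)
    case (1 c d t0)
    then have ee: "(c, d) \<in> GEk I P k" "proj (c, d) = (v, w)" "t0 = t" using e av by (auto simp: GkT_def)
    then have "(c, d) \<in> GE I P" using GEk_GE[OF k] by blast
    then obtain B where B: "snd c = Some B" "B \<in> P (fst c)" "proj (c, d) \<in> B" "d \<in> GV I P"
      unfolding GE_iff by auto
    have "fst c = v" "fst d = w" using ee by (auto simp: proj_def)
    then have "c = (v, Some B)" "d = (w, snd d)" using B by (metis prod.collapse)+
    then show ?thesis using 1 ee B av \<open>fst c = v\<close> by (auto simp: ETof_def)
  next
    case (2 c t0)
    then show ?thesis using e av by simp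
  qed
qed

lemma ETof_fin: assumes a: "a \<in> AT I" shows "finite (ETof I P a)"
proof -
  obtain v w t where av: "a = Inl ((v, w), t)" "(v, w) \<in> arcs I" using a by (auto simp: AT_def mv_arcs_def)
  then have v: "v \<in> nodes I" using arcs_nodes by auto
  have "ETof I P a \<subseteq> (\<lambda>e. Inl (e, t)) ` GE I P"
  proof
    fix e assume "e \<in> ETof I P a"
    then obtain B j where "e = Inl (((v, Some B), (w, j)), t)" "B \<in> P v" "(v, w) \<in> B" "(w, j) \<in> GV I P"
      using av by (auto simp: ETof_def)
    moreover then have "((v, Some B), (w, j)) \<in> GE I P" using v unfolding GE_iff by (simp add: proj_def)
    ultimately show "e \<in> (\<lambda>e. Inl (e, t)) ` GE I P" by blast
  qed
  then show ?thesis using finite_GE finite_subset by blast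
qed

lemma cap_sum: assumes R: "Rel x x'" and a: "a \<in> AT I" and k: "k \<in> comms I"
  shows "(\<Sum>e \<in> ETof I P a. d * of_int (x' k e)) = d * (of_int (x k a) :: real)"
proof -
  let ?S = "{e \<in> GkT I P k. tpi e = a}"
  have "(\<Sum>e \<in> ETof I P a. d * of_int (x' k e)) = (\<Sum>e \<in> ?S. d * (of_int (x' k e) :: real))"
  proof (rule sum.mono_neutral_right[OF ETof_fin[OF a] ETof_sub[OF a k]])
    show "\<forall>e\<in>ETof I P a - ?S. d * real_of_int (x' k e) = 0"
      using R ETof_tpi unfolding Rel_def by auto
  qed
  also have "\<dots> = (\<Sum>e \<in> ?S. d * (of_int (x k (tpi e)) :: real))"
    using R k unfolding Rel_def by (intro sum.cong) auto
  also have "\<dots> = (\<Sum>a' \<in> {a' \<in> DkT I k. a' = a}. d * (of_int (x k a') :: real))"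
    by (rule sum.reindex_bij_betw[OF bij_betw_restrict_pred[OF bij_k[OF k]]]) simp
  also have "\<dots> = d * (of_int (x k a) :: real)"
  proof (cases "a \<in> DkT I k")
    case True
    then have "{a' \<in> DkT I k. a' = a} = {a}" by auto
    then show ?thesis by simp
  next
    case False
    then have "{a' \<in> DkT I k. a' = a} = {}" by auto
    moreover have "x k a = 0" using R False unfolding Rel_def by auto
    ultimately show ?thesis by simp
  qed
  finally show ?thesis .
qed

lemma ET_AT: assumes k: "k \<in> comms I" and e: "e \<in> GkT I P k"
  shows "e \<in> ET I P \<longleftrightarrow> tpi e \<in> AT I"
proof (cases e rule: ttail.cases)
  case (1 c d t)
  then have "(c, d) \<in> GEk I P k" "t + tau I (proj (c, d)) \<le> horizon I"
    using e by (auto simp: GkT_def tauG_def)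
  moreover then have "(c, d) \<in> GE I P" "proj (c, d) \<in> arcs I"
    using GEk_GE[OF k] GEk_proj[OF k] Ak_arcs[OF k] by blast+
  ultimately show ?thesis using 1 by (simp add: ET_def AT_def tauG_def)
next
  case (2 c t)
  then show ?thesis by (simp add: ET_def AT_def)
qed

lemma obj_k: assumes R: "Rel x x'" and k: "k \<in> comms I"
  shows "(\<Sum>e \<in> ET I P. ucost I k (proj (flat_arc e)) * dem I k * of_int (x' k e))
       = (\<Sum>a \<in> AT I. ucost I k (flat_arc a) * dem I k * of_int (x k a))"
proof -
  let ?S = "{e \<in> GkT I P k. e \<in> ET I P}"
  have "(\<Sum>e \<in> ET I P. ucost I k (proj (flat_arc e)) * dem I k * of_int (x' k e))
      = (\<Sum>e \<in> ?S. ucost I k (proj (flat_arc e)) * dem I k * of_int (x' k e))"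
    by (rule sum.mono_neutral_right[OF finite_ET]) (use R in \<open>auto simp: Rel_def\<close>)
  also have "\<dots> = (\<Sum>e \<in> ?S. ucost I k (flat_arc (tpi e)) * dem I k * of_int (x k (tpi e)))"
  proof (rule sum.cong[OF refl])
    fix e assume e: "e \<in> ?S"
    then obtain e0 t where "e = Inl (e0, t)" by (auto simp: ET_def mv_arcs_def)
    then show "ucost I k (proj (flat_arc e)) * dem I k * of_int (x' k e)
      = ucost I k (flat_arc (tpi e)) * dem I k * of_int (x k (tpi e))"
      using R k e unfolding Rel_def by simp
  qed
  also have "\<dots> = (\<Sum>a \<in> {a \<in> DkT I k. a \<in> AT I}. ucost I k (flat_arc a) * dem I k * of_int (x k a))"
    by (rule sum.reindex_bij_betw[OF bij_betw_restrict_pred[OF bij_k[OF k]]]) (rule ET_AT[OF k])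
  also have "\<dots> = (\<Sum>a \<in> AT I. ucost I k (flat_arc a) * dem I k * of_int (x k a))"
    by (rule sum.mono_neutral_left[OF finite_AT]) (use R in \<open>auto simp: Rel_def\<close>)
  finally show ?thesis .
qed

lemma obj_eq: assumes R: "Rel x x'" shows "objG I P (x', y) = objD I (x, y)"
proof -
  have "(\<Sum>k \<in> comms I. \<Sum>e \<in> ET I P. ucost I k (proj (flat_arc e)) * dem I k * of_int (x' k e))
      = (\<Sum>k \<in> comms I. \<Sum>a \<in> AT I. ucost I k (flat_arc a) * dem I k * of_int (x k a))"
    using obj_k[OF R] by (rule sum.cong[OF refl])
  also have "\<dots> = (\<Sum>a \<in> AT I. \<Sum>k \<in> comms I. ucost I k (flat_arc a) * dem I k * of_int (x k a))"
    by (rule sum.swap)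
  finally show ?thesis by (simp add: objG_def objD_def)
qed

end

context inst begin

lemma flow_k: assumes R: "Rel x x'" and k: "k \<in> comms I"
  shows "flow_cons (GVk I P k) (GEk I P k) (tauG I) (horizon I)
                       (origG I P k, rel I k) ((dest I k, None), dl I k) (x' k)
     \<longleftrightarrow> flow_cons (Nk I k) (Ak I k) (tau I) (horizon I)
                       (orig I k, rel I k) (dest I k, dl I k) (x k)"
proof -
  have p1: "\<And>e. tauG I e = tau I (proj e)" by (simp add: tauG_def)
  have p2: "fst (origG I P k, rel I k) \<in> GVk I P k" using origG_prop[OF k] by simp
  have p3: "fst ((dest I k, None), dl I k) \<in> GVk I P k" using dest_GVk by simp
  have p4: "\<And>e. e \<in> tarcs (GVk I P k) (GEk I P k) (tauG I) (horizon I) \<Longrightarrow> x' k e = x k (tpi e)"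
    using R k unfolding Rel_def GkT_def by blast
  note ft = flow_transfer[where V'="GVk I P k" and V="Nk I k" and E'="GEk I P k" and E="Ak I k" and tt'="tauG I" and tt="tau I" and T="horizon I"
   and src'="(origG I P k, rel I k)" and snk'="((dest I k, None), dl I k)" and x'="x' k" and x="x k"]
  have "flow_cons (GVk I P k) (GEk I P k) (tauG I) (horizon I)
                       (origG I P k, rel I k) ((dest I k, None), dl I k) (x' k)
     \<longleftrightarrow> flow_cons (Nk I k) (Ak I k) (tau I) (horizon I)
          (apfst fst (origG I P k, rel I k)) (apfst fst ((dest I k, None :: ('n \<times> 'n) set option), dl I k)) (x k)"
    by (rule ft[OF GVk_inj[OF k] GVk_fst[OF k] GEk_sub GEk_proj[OF k] p1 p2 p3 p4])
  then show ?thesis using origG_prop[OF k] by simp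
qed

lemma bin_k: assumes R: "Rel x x'" and k: "k \<in> comms I"
  shows "(\<forall>a \<in> DkT I k. x k a \<in> {0, 1}) \<longleftrightarrow> (\<forall>e \<in> GkT I P k. x' k e \<in> {0, 1})"
proof -
  have b: "bij_betw tpi (GkT I P k) (DkT I k)" by (rule bij_k[OF k])
  have eq: "\<forall>e \<in> GkT I P k. x' k e = x k (tpi e)" using R k unfolding Rel_def by blast
  have "DkT I k = tpi ` GkT I P k" using b by (simp add: bij_betw_def)
  then show ?thesis using eq by auto
qed

lemma feas_iff: assumes R: "Rel x x'"
  shows "(x, y) \<in> feasD I \<longleftrightarrow> (x', y) \<in> feasG I P"
proof -
  have s1: "\<forall>k a. (k \<notin> comms I \<or> a \<notin> DkT I k) \<longrightarrow> x k a = 0"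
    and s2: "\<forall>k e. (k \<notin> comms I \<or> e \<notin> GkT I P k) \<longrightarrow> x' k e = 0"
    using R unfolding Rel_def by blast+
  have f: "(\<forall>k \<in> comms I. flow_cons (Nk I k) (Ak I k) (tau I) (horizon I)
                       (orig I k, rel I k) (dest I k, dl I k) (x k))
      \<longleftrightarrow> (\<forall>k \<in> comms I. flow_cons (GVk I P k) (GEk I P k) (tauG I) (horizon I)
                       (origG I P k, rel I k) ((dest I k, None), dl I k) (x' k))"
    using flow_k[OF R] by auto
  have c: "(\<forall>a \<in> AT I. (\<Sum>k \<in> comms I. dem I k * of_int (x k a))
                     \<le> of_nat (cap I (flat_arc a)) * of_int (y a))
     \<longleftrightarrow> (\<forall>a \<in> AT I. (\<Sum>k \<in> comms I. \<Sum>e \<in> ETof I P a. dem I k * of_int (x' k e))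
                     \<le> of_nat (cap I (flat_arc a)) * of_int (y a))"
  proof -
    have "(\<Sum>k \<in> comms I. \<Sum>e \<in> ETof I P a. dem I k * of_int (x' k e)) = (\<Sum>k \<in> comms I. dem I k * of_int (x k a))"
      if "a \<in> AT I" for a
      using cap_sum[OF R that] by (intro sum.cong) auto
    then show ?thesis by auto
  qed
  have b: "(\<forall>k \<in> comms I. \<forall>a \<in> DkT I k. x k a \<in> {0, 1}) \<longleftrightarrow> (\<forall>k \<in> comms I. \<forall>e \<in> GkT I P k. x' k e \<in> {0, 1})"
    using bin_k[OF R] by auto
  show ?thesis unfolding feasD_def feasG_def using s1 s2 f c b by simp
qed

definition xphi :: "('k \<Rightarrow> 'n tarc \<Rightarrow> int) \<Rightarrow> ('k \<Rightarrow> 'n copy tarc \<Rightarrow> int)" where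
  "xphi x = (\<lambda>k e. if k \<in> comms I \<and> e \<in> GkT I P k then x k (tpi e) else 0)"

definition xpsi :: "('k \<Rightarrow> 'n copy tarc \<Rightarrow> int) \<Rightarrow> ('k \<Rightarrow> 'n tarc \<Rightarrow> int)" where
  "xpsi x' = (\<lambda>k a. if k \<in> comms I \<and> a \<in> DkT I k then x' k (the_inv_into (GkT I P k) tpi a) else 0)"

lemma Rel_phi: assumes "\<forall>k a. (k \<notin> comms I \<or> a \<notin> DkT I k) \<longrightarrow> x k a = 0"
  shows "Rel x (xphi x)"
  using assms unfolding Rel_def xphi_def by auto

lemma Rel_psi: assumes s: "\<forall>k e. (k \<notin> comms I \<or> e \<notin> GkT I P k) \<longrightarrow> x' k e = 0"
  shows "Rel (xpsi x') x'"
proof -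
  have "x' k e = xpsi x' k (tpi e)" if k: "k \<in> comms I" and e: "e \<in> GkT I P k" for k e
  proof -
    have b: "bij_betw tpi (GkT I P k) (DkT I k)" by (rule bij_k[OF k])
    then have "tpi e \<in> DkT I k" using e by (auto simp: bij_betw_def)
    moreover have "the_inv_into (GkT I P k) tpi (tpi e) = e"
      using b e by (simp add: bij_betw_def the_inv_into_f_f)
    ultimately show ?thesis using k by (simp add: xpsi_def)
  qed
  then show ?thesis using s unfolding Rel_def xpsi_def by auto
qed

lemma Rel_phi_eq: assumes "Rel x x'" shows "x' = xphi x"
  using assms unfolding Rel_def xphi_def by (intro ext) auto

lemma Rel_psi_eq: assumes R: "Rel x x'" shows "x = xpsi x'"
proof (intro ext)
  fix k a
  show "x k a = xpsi x' k a"
  proof (cases "k \<in> comms I \<and> a \<in> DkT I k")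
    case True
    then have k: "k \<in> comms I" and a: "a \<in> DkT I k" by auto
    have b: "bij_betw tpi (GkT I P k) (DkT I k)" by (rule bij_k[OF k])
    let ?e = "the_inv_into (GkT I P k) tpi a"
    have "?e \<in> GkT I P k" "tpi ?e = a"
      using b a by (auto intro: the_inv_into_into f_the_inv_into_f_bij_betw simp: bij_betw_def)
    then show ?thesis using R True unfolding Rel_def xpsi_def by auto
  next
    case False
    then show ?thesis using R unfolding Rel_def xpsi_def by auto
  qed
qed

theorem main:
  shows "nvarsD I = nvarsG I P \<and> nconsD I = nconsG I P
       \<and> (\<exists>\<phi>. bij_betw \<phi> (feasD I) (feasG I P) \<and> (\<forall>s \<in> feasD I. objG I P (\<phi> s) = objD I s))"
proof (intro conjI)
  have "bij_betw (\<lambda>(k, e). (k, tpi e)) (Sigma (comms I) (GkT I P)) (Sigma (comms I) (DkT I))"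
    by (rule bij_Sigma) (rule bij_k)
  then show "nvarsD I = nvarsG I P" unfolding nvarsD_def nvarsG_def
    using bij_betw_same_card by metis
next
  have "bij_betw (\<lambda>(k, e). (k, apfst fst e)) (Sigma (comms I) (\<lambda>k. tnodes (GVk I P k) (horizon I)))
         (Sigma (comms I) (\<lambda>k. tnodes (Nk I k) (horizon I)))"
    by (rule bij_Sigma) (rule bij_nodes)
  then show "nconsD I = nconsG I P" unfolding nconsD_def nconsG_def
    using bij_betw_same_card by metis
next
  let ?phi = "\<lambda>(x, y). (xphi x, y)"
  let ?psi = "\<lambda>(x', y). (xpsi x', y)"
  have supD: "\<forall>k a. (k \<notin> comms I \<or> a \<notin> DkT I k) \<longrightarrow> x k a = 0" if "(x, y) \<in> feasD I" for x y
    using that unfolding feasD_def by blast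
  have supG: "\<forall>k e. (k \<notin> comms I \<or> e \<notin> GkT I P k) \<longrightarrow> x' k e = 0" if "(x', y) \<in> feasG I P" for x' y
    using that unfolding feasG_def by blast
  have RD: "Rel x (xphi x)" if "(x, y) \<in> feasD I" for x y by (rule Rel_phi[OF supD[OF that]])
  have RG: "Rel (xpsi x') x'" if "(x', y) \<in> feasG I P" for x' y by (rule Rel_psi[OF supG[OF that]])
  have "bij_betw ?phi (feasD I) (feasG I P)"
  proof (rule bij_betw_byWitness[where f' = ?psi])
    show "\<forall>s \<in> feasD I. ?psi (?phi s) = s"
    proof
      fix s assume s: "s \<in> feasD I"
      obtain x y where xy: "s = (x, y)" by (cases s)
      have "xpsi (xphi x) = x" using Rel_psi_eq[OF RD[OF s[unfolded xy]]] by simp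
      then show "?psi (?phi s) = s" using xy by simp
    qed
    show "\<forall>s \<in> feasG I P. ?phi (?psi s) = s"
    proof
      fix s assume s: "s \<in> feasG I P"
      obtain x y where xy: "s = (x, y)" by (cases s)
      have "xphi (xpsi x) = x" using Rel_phi_eq[OF RG[OF s[unfolded xy]]] by simp
      then show "?phi (?psi s) = s" using xy by simp
    qed
    show "?phi ` feasD I \<subseteq> feasG I P"
    proof
      fix s' assume "s' \<in> ?phi ` feasD I"
      then obtain s where s: "s \<in> feasD I" "s' = ?phi s" by blast
      obtain x y where xy: "s = (x, y)" by (cases s)
      have "(xphi x, y) \<in> feasG I P" using feas_iff[OF RD[OF s(1)[unfolded xy]]] s(1) xy by simp
      then show "s' \<in> feasG I P" using s xy by simp
    qed
    show "?psi ` feasG I P \<subseteq> feasD I"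
    proof
      fix s' assume "s' \<in> ?psi ` feasG I P"
      then obtain s where s: "s \<in> feasG I P" "s' = ?psi s" by blast
      obtain x y where xy: "s = (x, y)" by (cases s)
      have "(xpsi x, y) \<in> feasD I" using feas_iff[OF RG[OF s(1)[unfolded xy]]] s(1) xy by simp
      then show "s' \<in> feasD I" using s xy by simp
    qed
  qed
  moreover have "\<forall>s \<in> feasD I. objG I P (?phi s) = objD I s"
  proof
    fix s assume s: "s \<in> feasD I"
    obtain x y where xy: "s = (x, y)" by (cases s)
    show "objG I P (?phi s) = objD I s" using obj_eq[OF RD[OF s[unfolded xy]]] xy by simp
  qed
  ultimately show "\<exists>\<phi>. bij_betw \<phi> (feasD I) (feasG I P) \<and> (\<forall>s \<in> feasD I. objG I P (\<phi> s) = objD I s)"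
    by blast
qed

end

theorem theorem2:
  fixes I :: "('n, 'k) sndrr" and P :: "'n \<Rightarrow> ('n \<times> 'n) set set"
  assumes "valid_instance I" and "valid_partition I P"
  shows "nvarsD I = nvarsG I P \<and> nconsD I = nconsG I P
       \<and> (\<exists>\<phi>. bij_betw \<phi> (feasD I) (feasG I P) \<and> (\<forall>s \<in> feasD I. objG I P (\<phi> s) = objD I s))"
proof -
  interpret inst I P using assms by unfold_locales
  show ?thesis by (rule main)
qed

end
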